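(* Let $H\le\widetilde{\mathcal{P}}_t$ be an abelian subgroup of $t$-qubit Pauli strings, let $C(H)\le\widetilde{\mathcal{P}}_t$ be its centralizer, and let $\widetilde{\mathcal{Q}}_t=\{\mathtt{I},\mathtt{X},\mathtt{Y}\}^{\times t}\subseteq\widetilde{\mathcal{P}}_t$ be the set of $\mathtt{Z}$-free strings. Then $$\lvert\widetilde{\mathcal{Q}}_t\cap C(H)\rvert=\frac{1}{\lvert H\rvert}\sum_{h\in H}3^{n_I(h)}(-1)^{n_Z(h)},$$ where $n_I(h)$ and $n_Z(h)$ denote the number of tensor positions at which $h$ equals $\mathtt{I}$ and $\mathtt{Z}$, respectively.
   Context: $\widetilde{\mathcal{P}}_t$ is the group of $t$-qubit Pauli operators modulo phases $\{\pm1,\pm i\}$, whose elements are strings in $\{\mathtt{I},\mathtt{X},\mathtt{Y},\mathtt{Z}\}^t$. A subgroup is abelian if its elements pairwise commute as operators (on representatives), and $C(H)$ is the set of strings in $\widetilde{\mathcal{P}}_t$ commuting with every element of $H$. *)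

theory Defs
  imports Complex_Main
begin

datatype pauli = PI | PX | PY | PZ

text \<open>Single-qubit Pauli product modulo phases (the Klein four-group).\<close>
fun pmul :: "pauli \<Rightarrow> pauli \<Rightarrow> pauli" where
  "pmul PI q = q"
| "pmul p PI = p"
| "pmul PX PX = PI" | "pmul PY PY = PI" | "pmul PZ PZ = PI"
| "pmul PX PY = PZ" | "pmul PY PX = PZ"
| "pmul PX PZ = PY" | "pmul PZ PX = PY"
| "pmul PY PZ = PX" | "pmul PZ PY = PX"

definition panti :: "pauli \<Rightarrow> pauli \<Rightarrow> bool" where
  "panti p q \<longleftrightarrow> p \<noteq> PI \<and> q \<noteq> PI \<and> p \<noteq> q"

definition pstrings :: "nat \<Rightarrow> pauli list set" where
  "pstrings t = {s. length s = t}"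

definition smul :: "pauli list \<Rightarrow> pauli list \<Rightarrow> pauli list" where
  "smul a b = map2 pmul a b"

definition sid :: "nat \<Rightarrow> pauli list" where
  "sid t = replicate t PI"

text \<open>Two Pauli strings commute (as operators) iff they anticommute at an even
  number of positions.\<close>
definition scommute :: "pauli list \<Rightarrow> pauli list \<Rightarrow> bool" where
  "scommute a b \<longleftrightarrow> even (card {i. i < length a \<and> panti (a ! i) (b ! i)})"

definition is_subgroup :: "nat \<Rightarrow> pauli list set \<Rightarrow> bool" where
  "is_subgroup t H \<longleftrightarrow> H \<subseteq> pstrings t \<and> sid t \<in> H \<and>
     (\<forall>a\<in>H. \<forall>b\<in>H. smul a b \<in> H)"

definition is_abelian :: "pauli list set \<Rightarrow> bool" where
  "is_abelian H \<longleftrightarrow> (\<forall>a\<in>H. \<forall>b\<in>H. scommute a b)"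

definition centralizer :: "nat \<Rightarrow> pauli list set \<Rightarrow> pauli list set" where
  "centralizer t H = {s \<in> pstrings t. \<forall>h\<in>H. scommute s h}"

definition zfree :: "nat \<Rightarrow> pauli list set" where
  "zfree t = {s \<in> pstrings t. set s \<subseteq> {PI, PX, PY}}"

definition nI :: "pauli list \<Rightarrow> nat" where
  "nI h = length (filter (\<lambda>p. p = PI) h)"

definition nZ :: "pauli list \<Rightarrow> nat" where
  "nZ h = length (filter (\<lambda>p. p = PZ) h)"

end

theory Submission
  imports Defs
begin

definition sg :: "pauli \<Rightarrow> pauli \<Rightarrow> real" where
  "sg p q = (if panti p q then -1 else 1)"

fun chi :: "pauli list \<Rightarrow> pauli list \<Rightarrow> real" where
  "chi (p#ps) (h#hs) = sg p h * chi ps hs"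
| "chi _ _ = 1"

lemma card_Suc_split:
  "card {i. i < Suc n \<and> P i} = (if P 0 then 1 else 0) + card {i. i < n \<and> P (Suc i)}"
proof -
  have e: "{i. i < Suc n \<and> P i} = (if P 0 then {0} else {}) \<union> Suc ` {i. i < n \<and> P (Suc i)}"
    by (auto simp: less_Suc_eq_0_disj)
  have c: "card (Suc ` {i. i < n \<and> P (Suc i)}) = card {i. i < n \<and> P (Suc i)}"
    by (simp add: card_image)
  show ?thesis unfolding e using c by auto
qed

lemma chi_card:
  "length a = length b \<Longrightarrow> chi a b = (-1) ^ card {i. i < length a \<and> panti (a!i) (b!i)}"
proof (induction a arbitrary: b)
  case Nil then show ?case by simp
next
  case (Cons p ps)
  then obtain h hs where b: "b = h # hs" "length hs = length ps" by (cases b) auto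
  show ?case using Cons.IH[OF b(2)[symmetric]] b
    by (simp add: card_Suc_split sg_def)
qed

lemma sg_mult: "sg p (pmul a b) = sg p a * sg p b"
  by (cases p; cases a; cases b) (simp_all add: sg_def panti_def)

lemma smul_Cons: "smul (a#as) (b#bs) = pmul a b # smul as bs"
  by (simp add: smul_def)

lemma length_smul: "length (smul a b) = min (length a) (length b)"
  by (simp add: smul_def)

lemma chi_mult:
  "length q = length a \<Longrightarrow> length a = length b \<Longrightarrow> chi q (smul a b) = chi q a * chi q b"
proof (induction q arbitrary: a b)
  case Nil then show ?case by (simp add: smul_def)
next
  case (Cons p ps)
  obtain x xs where a: "a = x # xs" "length xs = length ps"
    using Cons.prems(1) by (cases a) auto
  obtain y ys where b: "b = y # ys" "length ys = length ps"
    using Cons.prems(1,2) by (cases b) auto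
  have "chi ps (smul xs ys) = chi ps xs * chi ps ys"
    using Cons.IH[of xs ys] a b by simp
  then show ?case using a b by (simp add: smul_Cons sg_mult)
qed

lemma m1pow: "(-1::real)^n = 1 \<or> (-1::real)^n = -1"
  by (cases "even n") auto

lemma m1pow_eq: "((-1::real)^n = 1) \<longleftrightarrow> even n"
  by (cases "even n") auto

lemma chi_pm: "length a = length b \<Longrightarrow> chi a b = 1 \<or> chi a b = -1"
  by (simp add: chi_card m1pow)

lemma scommute_chi: "length a = length b \<Longrightarrow> scommute a b \<longleftrightarrow> chi a b = 1"
  unfolding scommute_def by (simp add: chi_card m1pow_eq)

lemma finite_pauli: "finite (UNIV :: pauli set)"
proof -
  have "UNIV = {PI, PX, PY, PZ}" by (auto intro: pauli.exhaust)
  then show ?thesis by (metis finite.emptyI finite_insert)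
qed

lemma finite_pstrings: "finite (pstrings t)"
proof -
  have "pstrings t = {xs. set xs \<subseteq> UNIV \<and> length xs = t}" by (auto simp: pstrings_def)
  then show ?thesis using finite_lists_length_eq[OF finite_pauli] by simp
qed

lemma zfree_0: "zfree 0 = {[]}"
  by (auto simp: zfree_def pstrings_def)

lemma zfree_Suc: "zfree (Suc n) = (\<lambda>(p,q). p#q) ` ({PI,PX,PY} \<times> zfree n)"
proof
  show "zfree (Suc n) \<subseteq> (\<lambda>(p,q). p#q) ` ({PI,PX,PY} \<times> zfree n)"
  proof
    fix s assume "s \<in> zfree (Suc n)"
    then obtain p q where "s = p # q" "p \<in> {PI,PX,PY}" "q \<in> zfree n"
      by (cases s) (auto simp: zfree_def pstrings_def)
    then show "s \<in> (\<lambda>(p,q). p#q) ` ({PI,PX,PY} \<times> zfree n)" by force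
  qed
qed (auto simp: zfree_def pstrings_def)

lemma sum_zfree:
  "(\<Sum>q\<in>zfree (length h). chi q h) = 3 ^ nI h * (-1) ^ nZ h"
proof (induction h)
  case Nil then show ?case by (simp add: zfree_0 nI_def nZ_def)
next
  case (Cons x hs)
  have inj: "inj_on (\<lambda>(p,q). p#q) ({PI,PX,PY} \<times> zfree (length hs))"
    by (auto simp: inj_on_def)
  have "(\<Sum>q\<in>zfree (length (x#hs)). chi q (x#hs))
      = (\<Sum>pq\<in>{PI,PX,PY} \<times> zfree (length hs). chi ((\<lambda>(p,q). p#q) pq) (x#hs))"
    by (simp only: length_Cons zfree_Suc sum.reindex[OF inj] o_def)
  also have "\<dots> = (\<Sum>(p,q)\<in>{PI,PX,PY} \<times> zfree (length hs). sg p x * chi q hs)"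
    by (intro sum.cong) auto
  also have "\<dots> = (\<Sum>p\<in>{PI,PX,PY}. \<Sum>q\<in>zfree (length hs). sg p x * chi q hs)"
    by (simp only: sum.cartesian_product)
  also have "\<dots> = (\<Sum>p\<in>{PI,PX,PY}. sg p x) * (\<Sum>q\<in>zfree (length hs). chi q hs)"
    by (simp only: sum_product)
  also have "\<dots> = (\<Sum>p\<in>{PI,PX,PY}. sg p x) * (3 ^ nI hs * (-1) ^ nZ hs)"
    using Cons.IH by simp
  also have "\<dots> = 3 ^ nI (x#hs) * (-1) ^ nZ (x#hs)"
    by (cases x) (simp_all add: sg_def panti_def nI_def nZ_def)
  finally show ?case .
qed

theorem theorem8:
  fixes t :: nat and H :: "pauli list set"
  assumes "is_subgroup t H" and "is_abelian H"
  shows "(of_nat (card (zfree t \<inter> centralizer t H)) :: real) =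
    (1 / of_nat (card H)) * (\<Sum>h\<in>H. 3 ^ nI h * (-1) ^ nZ h)"
proof -
  have Hsub: "H \<subseteq> pstrings t" and idH: "sid t \<in> H"
    and cl: "\<And>a b. a \<in> H \<Longrightarrow> b \<in> H \<Longrightarrow> smul a b \<in> H"
    using assms(1) by (auto simp: is_subgroup_def)
  have finH: "finite H" using Hsub finite_pstrings finite_subset by blast
  have cardH: "card H > 0" using finH idH card_gt_0_iff by blast
  have lenH: "\<And>h. h \<in> H \<Longrightarrow> length h = t" using Hsub by (auto simp: pstrings_def)
  have finZ: "finite (zfree t)" using finite_pstrings finite_subset
    by (metis (no_types, lifting) mem_Collect_eq subsetI zfree_def)
  have lenZ: "\<And>q. q \<in> zfree t \<Longrightarrow> length q = t" by (auto simp: zfree_def pstrings_def)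
  have smul_inv: "\<And>a b. length a = length b \<Longrightarrow> smul a (smul a b) = b"
  proof -
    fix a b :: "pauli list"
    assume "length a = length b"
    then show "smul a (smul a b) = b"
    proof (induction a arbitrary: b)
      case Nil then show ?case by (simp add: smul_def)
    next
      case (Cons x xs)
      then obtain y ys where "b = y # ys" "length ys = length xs" by (cases b) auto
      moreover have "pmul x (pmul x y) = y" by (cases x; cases y) simp_all
      ultimately show ?case using Cons.IH by (simp add: smul_Cons)
    qed
  qed
  have charsum: "(\<Sum>h\<in>H. chi q h) = (if q \<in> centralizer t H then real (card H) else 0)"
    if q: "q \<in> zfree t" for q
  proof (cases "q \<in> centralizer t H")
    case True
    then have "\<And>h. h \<in> H \<Longrightarrow> chi q h = 1"
      using scommute_chi lenH lenZ[OF q] by (auto simp: centralizer_def)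
    then show ?thesis using True by simp
  next
    case False
    then obtain h0 where h0: "h0 \<in> H" "\<not> scommute q h0"
      using q by (auto simp: centralizer_def zfree_def)
    then have c0: "chi q h0 = -1" using scommute_chi chi_pm lenH lenZ[OF q] by metis
    have bij: "bij_betw (smul h0) H H"
    proof (rule bij_betw_byWitness[where f' = "smul h0"])
      show "\<forall>a\<in>H. smul h0 (smul h0 a) = a" using smul_inv lenH h0(1) by metis
      show "\<forall>a\<in>H. smul h0 (smul h0 a) = a" using smul_inv lenH h0(1) by metis
      show "smul h0 ` H \<subseteq> H" using cl h0(1) by auto
      show "smul h0 ` H \<subseteq> H" using cl h0(1) by auto
    qed
    have "(\<Sum>h\<in>H. chi q h) = (\<Sum>h\<in>H. chi q (smul h0 h))"
      using sum.reindex_bij_betw[OF bij, of "chi q"] by simp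
    also have "\<dots> = (\<Sum>h\<in>H. - chi q h)"
      using chi_mult lenH lenZ[OF q] h0(1) c0 by (intro sum.cong) auto
    finally have "(\<Sum>h\<in>H. chi q h) = 0" by (simp add: sum_negf)
    then show ?thesis using False by simp
  qed
  have "(of_nat (card (zfree t \<inter> centralizer t H)) :: real)
      = (\<Sum>q\<in>zfree t. if q \<in> centralizer t H then 1 else 0)"
    using finZ by (simp add: sum.If_cases Int_def)
  also have "\<dots> = (\<Sum>q\<in>zfree t. (1 / real (card H)) * (\<Sum>h\<in>H. chi q h))"
    using charsum cardH by (intro sum.cong) auto
  also have "\<dots> = (1 / real (card H)) * (\<Sum>h\<in>H. \<Sum>q\<in>zfree t. chi q h)"
    by (simp add: sum_distrib_left sum.swap[of _ "zfree t"])
  also have "\<dots> = (1 / real (card H)) * (\<Sum>h\<in>H. 3 ^ nI h * (-1) ^ nZ h)"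
    using sum_zfree lenH by (metis (no_types, lifting) sum.cong)
  finally show ?thesis by simp
qed

end
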